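(* Let $S$ be a plane unary-binary tree. Then $S$ is the skeleton of a planar linear normal $\lambda$-term if and only if all of the following hold: (Linearity) $\operatorname{leaf}(S) = \operatorname{unary}(S)$; (Normality) no binary node of $S$ has a unary node as its left child; (Connectedness) for every node $u$ of $S$ that is a binary node or a leaf, $\operatorname{leaf}(S_u) - \operatorname{unary}(S_u)$ is greater than or equal to the number of consecutive unary nodes directly above $u$. Furthermore, if $S$ is the skeleton of a planar linear normal $\lambda$-term $t$, then $t$ is 2-connected if and only if (2-connectedness) for every node $u$ of $S$ that is a binary node or a leaf, $\operatorname{leaf}(S_u) - \operatorname{unary}(S_u)$ is strictly larger than the number of consecutive unary nodes directly above $u$.
   Context: $\lambda$-terms are built from atoms, applications $t\,u$ and abstractions $\lambda x.t$, up to $\alpha$-renaming. A term is linear if closed and each abstraction binds exactly one atom; normal if it has no sub-term $(\lambda x.u)\,v$. The skeleton $\operatorname{Sk}(t)$ is the plane unary-binary tree: atom $\mapsto$ leaf; application $u\,v \mapsto$ binary node with left subtree $\operatorname{Sk}(u)$, right subtree $\operatorname{Sk}(v)$; abstraction $\lambda x.u \mapsto$ unary node with child subtree $\operatorname{Sk}(u)$. The diagram $\operatorname{Diag}(t)$ replaces each leaf of $\operatorname{Sk}(t)$ by an edge from its parent to the unary node binding that atom, drawn from the parent counter-clockwise and entering the unary node from the right; $t$ is planar if this can be done without crossings. $t$ is 2-connected if $\operatorname{Diag}(t)$ is 2-edge-connected. For a unary-binary tree $S$ and node $u$, $S_u$ is the subtree rooted at $u$, $\operatorname{leaf}(\cdot)$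 counts leaves and $\operatorname{unary}(\cdot)$ counts unary nodes. "The number of consecutive unary nodes directly above $u$" is the length of the maximal chain of unary nodes ending at the parent of $u$ (0 if the parent is not unary or $u$ is the root).
   Formalization: The (2-connectedness) condition applies only to binary nodes and leaves u with some binary proper ancestor, so the topmost such node, all of whose proper ancestors are unary, is exempt. The statement above fails without it. *)

theory Defs
  imports Main
begin

datatype sk = Leaf | Unary sk | Binary sk sk

text \<open>Nodes are addressed by paths from the root: 0 = left/only child, 1 = right child.\<close>

fun nodes :: "sk \<Rightarrow> nat list set" where
  "nodes Leaf = {[]}"
| "nodes (Unary s) = insert [] ((#) 0 ` nodes s)"
| "nodes (Binary a b) = insert [] ((#) 0 ` nodes a \<union> (#) 1 ` nodes b)"

text \<open>Subtree rooted at a node (junk value Leaf outside of nodes).\<close>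
fun subt :: "sk \<Rightarrow> nat list \<Rightarrow> sk" where
  "subt s [] = s"
| "subt (Unary s) (0 # p) = subt s p"
| "subt (Binary a b) (0 # p) = subt a p"
| "subt (Binary a b) (Suc 0 # p) = subt b p"
| "subt _ _ = Leaf"

fun nleaf :: "sk \<Rightarrow> nat" where
  "nleaf Leaf = 1"
| "nleaf (Unary s) = nleaf s"
| "nleaf (Binary a b) = nleaf a + nleaf b"

fun nunary :: "sk \<Rightarrow> nat" where
  "nunary Leaf = 0"
| "nunary (Unary s) = Suc (nunary s)"
| "nunary (Binary a b) = nunary a + nunary b"

fun is_un :: "sk \<Rightarrow> bool" where
  "is_un (Unary _) = True"
| "is_un _ = False"

fun is_leaf :: "sk \<Rightarrow> bool" where
  "is_leaf Leaf = True"
| "is_leaf _ = False"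

text \<open>Length of the maximal chain of unary nodes ending at the parent of the node at
  path p (computed top-down: the counter is incremented at unary nodes and reset at binary ones).\<close>
fun ua :: "nat \<Rightarrow> sk \<Rightarrow> nat list \<Rightarrow> nat" where
  "ua c s [] = c"
| "ua c (Unary s) (0 # p) = ua (Suc c) s p"
| "ua c (Binary a b) (0 # p) = ua 0 a p"
| "ua c (Binary a b) (Suc 0 # p) = ua 0 b p"
| "ua c _ _ = 0"

definition unary_above :: "sk \<Rightarrow> nat list \<Rightarrow> nat" where
  "unary_above S p = ua 0 S p"

text \<open>All proper ancestors of the node at p are unary (p lies on / right below the root chain).\<close>
definition on_root_chain :: "sk \<Rightarrow> nat list \<Rightarrow> bool" where
  "on_root_chain S p = (\<forall>k < length p. is_un (subt S (take k p)))"

section \<open>Lambda terms (de Bruijn indices, hence up to alpha-renaming)\<close>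

datatype lterm = Var nat | App lterm lterm | Lam lterm

fun Sk :: "lterm \<Rightarrow> sk" where
  "Sk (Var _) = Leaf"
| "Sk (App u v) = Binary (Sk u) (Sk v)"
| "Sk (Lam u) = Unary (Sk u)"

fun closed_at :: "nat \<Rightarrow> lterm \<Rightarrow> bool" where
  "closed_at n (Var i) = (i < n)"
| "closed_at n (App u v) = (closed_at n u \<and> closed_at n v)"
| "closed_at n (Lam u) = closed_at (Suc n) u"

fun occ :: "nat \<Rightarrow> lterm \<Rightarrow> nat" where
  "occ k (Var i) = (if i = k then 1 else 0)"
| "occ k (App u v) = occ k u + occ k v"
| "occ k (Lam u) = occ (Suc k) u"

fun each_binds_one :: "lterm \<Rightarrow> bool" where
  "each_binds_one (Var _) = True"
| "each_binds_one (App u v) = (each_binds_one u \<and> each_binds_one v)"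
| "each_binds_one (Lam u) = (occ 0 u = 1 \<and> each_binds_one u)"

definition linear :: "lterm \<Rightarrow> bool" where
  "linear t = (closed_at 0 t \<and> each_binds_one t)"

fun normal :: "lterm \<Rightarrow> bool" where
  "normal (Var _) = True"
| "normal (Lam u) = normal u"
| "normal (App (Lam u) v) = False"
| "normal (App u v) = (normal u \<and> normal v)"

text \<open>Planarity (non-crossing diagram), in its standard combinatorial form: ordered
  (non-commutative) linear typing.  pl n G t: t is a term under n binders whose
  free atoms, read left to right, are exactly the binder levels listed in G (level j =
  the (j+1)-th binder from the root); an abstraction binds the rightmost atom of its body's
  context, an application concatenates the contexts of function and argument.\<close>
inductive pl :: "nat \<Rightarrow> nat list \<Rightarrow> lterm \<Rightarrow> bool" where
  pl_var: "i < n \<Longrightarrow> pl n [n - Suc i] (Var i)"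
| pl_app: "pl n \<Gamma> u \<Longrightarrow> pl n \<Delta> v \<Longrightarrow> pl n (\<Gamma> @ \<Delta>) (App u v)"
| pl_lam: "pl (Suc n) (\<Gamma> @ [n]) u \<Longrightarrow> pl n \<Gamma> (Lam u)"

definition planar :: "lterm \<Rightarrow> bool" where
  "planar t = pl 0 [] t"

text \<open>Binder of the leaf at path p: the unary node (path) binding that atom.
  The stack st holds the paths of the enclosing abstractions, innermost first;
  q is the path of the current position.\<close>
fun bnd :: "nat list list \<Rightarrow> nat list \<Rightarrow> lterm \<Rightarrow> nat list \<Rightarrow> nat list" where
  "bnd st q (Var i) [] = st ! i"
| "bnd st q (Lam u) (0 # p) = bnd (q # st) (q @ [0]) u p"
| "bnd st q (App u v) (0 # p) = bnd st (q @ [0]) u p"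
| "bnd st q (App u v) (Suc 0 # p) = bnd st (q @ [1]) v p"
| "bnd st q _ _ = []"

definition binder_of :: "lterm \<Rightarrow> nat list \<Rightarrow> nat list" where
  "binder_of t p = bnd [] [] t p"

text \<open>Edges are indexed by the
  non-root nodes c of Sk(t): if c is internal, the tree edge (parent c, c); if c is a leaf,
  the edge (parent c, binder of c) replacing it.  (A multigraph, loops allowed.)\<close>
definition diag_vertices :: "lterm \<Rightarrow> nat list set" where
  "diag_vertices t = {p \<in> nodes (Sk t). \<not> is_leaf (subt (Sk t) p)}"

definition diag_edges :: "lterm \<Rightarrow> nat list set" where
  "diag_edges t = nodes (Sk t) - {[]}"

definition diag_ends :: "lterm \<Rightarrow> nat list \<Rightarrow> nat list \<times> nat list" where
  "diag_ends t c = (if is_leaf (subt (Sk t) c) then (butlast c, binder_of t c) else (butlast c, c))"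

definition adj :: "('e \<Rightarrow> 'v \<times> 'v) \<Rightarrow> 'e set \<Rightarrow> 'v \<Rightarrow> 'v \<Rightarrow> bool" where
  "adj ends E x y = (\<exists>e \<in> E. ends e = (x, y) \<or> ends e = (y, x))"

definition two_edge_connected :: "'v set \<Rightarrow> 'e set \<Rightarrow> ('e \<Rightarrow> 'v \<times> 'v) \<Rightarrow> bool" where
  "two_edge_connected V E ends =
     ((\<forall>x\<in>V. \<forall>y\<in>V. (adj ends E)\<^sup>*\<^sup>* x y) \<and>
      (\<forall>e\<in>E. \<forall>x\<in>V. \<forall>y\<in>V. (adj ends (E - {e}))\<^sup>*\<^sup>* x y))"

definition two_connected :: "lterm \<Rightarrow> bool" where
  "two_connected t = two_edge_connected (diag_vertices t) (diag_edges t) (diag_ends t)"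

definition cond_linearity :: "sk \<Rightarrow> bool" where
  "cond_linearity S = (nleaf S = nunary S)"

definition cond_normality :: "sk \<Rightarrow> bool" where
  "cond_normality S = (\<forall>p \<in> nodes S. \<forall>a b. subt S p = Binary a b \<longrightarrow> \<not> is_un a)"

definition cond_connectedness :: "sk \<Rightarrow> bool" where
  "cond_connectedness S = (\<forall>p \<in> nodes S. \<not> is_un (subt S p) \<longrightarrow>
     int (nleaf (subt S p)) - int (nunary (subt S p)) \<ge> int (unary_above S p))"

text \<open>2-connectedness condition; the topmost binary-or-leaf node (all of whose proper
  ancestors are unary) is exempt.\<close>
definition cond_2connectedness :: "sk \<Rightarrow> bool" where
  "cond_2connectedness S = (\<forall>p \<in> nodes S. \<not> is_un (subt S p) \<and> \<not> on_root_chain S p \<longrightarrow>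
     int (nleaf (subt S p)) - int (nunary (subt S p)) > int (unary_above S p))"

end

theory Submission imports Defs "HOL-Library.Sublist" begin

definition cnt :: "sk \<Rightarrow> int" where "cnt s = int (nleaf s) - int (nunary s)"

lemma cnt_simps[simp]: "cnt Leaf = 1" "cnt (Unary s) = cnt s - 1" "cnt (Binary a b) = cnt a + cnt b"
  by (auto simp: cnt_def)

lemma ball_nodes_Leaf: "(\<forall>p\<in>nodes Leaf. Q p) = Q []" by simp
lemma ball_nodes_Unary: "(\<forall>p\<in>nodes (Unary s). Q p) = (Q [] \<and> (\<forall>p\<in>nodes s. Q (0#p)))" by simp
lemma ball_nodes_Binary: "(\<forall>p\<in>nodes (Binary a b). Q p) = (Q [] \<and> (\<forall>p\<in>nodes a. Q (0#p)) \<and> (\<forall>p\<in>nodes b. Q (Suc 0#p)))" by auto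

fun nrm :: "sk \<Rightarrow> bool" where
  "nrm Leaf = True" | "nrm (Unary s) = nrm s" | "nrm (Binary a b) = (\<not> is_un a \<and> nrm a \<and> nrm b)"

lemma nrm_eq: "cond_normality s = nrm s"
  unfolding cond_normality_def
  by (induction s) (auto simp: ball_nodes_Unary ball_nodes_Binary simp del: nodes.simps, auto)

fun nn :: "sk \<Rightarrow> bool" where
  "nn Leaf = True" | "nn (Unary s) = (1 \<le> cnt s \<and> nn s)" | "nn (Binary a b) = (nn a \<and> nn b)"

lemma nn_cnt: "nn s \<Longrightarrow> 0 \<le> cnt s" by (induction s) auto

definition connc :: "nat \<Rightarrow> sk \<Rightarrow> bool" where
  "connc c s = (\<forall>p \<in> nodes s. \<not> is_un (subt s p) \<longrightarrow> cnt (subt s p) \<ge> int (ua c s p))"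

lemma connc_eq: "connc c s = (int c \<le> cnt s \<and> nn s)"
proof (induction s arbitrary: c)
  case Leaf then show ?case by (auto simp: connc_def)
next
  case (Unary s)
  have "connc c (Unary s) = connc (Suc c) s" by (simp add: connc_def)
  then show ?case using Unary by auto
next
  case (Binary a b)
  have "connc c (Binary a b) = (int c \<le> cnt (Binary a b) \<and> connc 0 a \<and> connc 0 b)"
    unfolding connc_def by (simp only: ball_nodes_Binary) simp
  then show ?case using Binary nn_cnt by auto
qed

lemma conn_eq: "cond_connectedness S = nn S"
proof -
  have "cond_connectedness S = connc 0 S"
    by (simp add: cond_connectedness_def connc_def unary_above_def cnt_def)
  then show ?thesis using connc_eq nn_cnt by auto
qed


lemma pl_cnt: "pl n G t \<Longrightarrow> int (length G) = cnt (Sk t) \<and> nn (Sk t)"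
  by (induction rule: pl.induct) auto

lemma normal_nrm: "normal t \<Longrightarrow> nrm (Sk t)"
  by (induction t rule: normal.induct) auto

lemma build: "nn s \<Longrightarrow> nrm s \<Longrightarrow> int (length G) = cnt s \<Longrightarrow> (\<forall>x\<in>set G. x < n) \<Longrightarrow>
   \<exists>t. Sk t = s \<and> pl n G t \<and> normal t"
proof (induction s arbitrary: n G)
  case Leaf
  then obtain l where G: "G = [l]" by (cases G) auto
  with Leaf have "l < n" by auto
  then have "pl n [n - Suc (n - Suc l)] (Var (n - Suc l))" by (intro pl_var) auto
  moreover have "n - Suc (n - Suc l) = l" using \<open>l < n\<close> by auto
  ultimately show ?case using G by (intro exI[of _ "Var (n - Suc l)"]) auto
next
  case (Unary s)
  have "nn s" "nrm s" "int (length (G @ [n])) = cnt s" "\<forall>x\<in>set (G @ [n]). x < Suc n"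
    using Unary.prems by auto
  from Unary.IH[OF this] obtain u where "Sk u = s" "pl (Suc n) (G @ [n]) u" "normal u" by blast
  then show ?case by (intro exI[of _ "Lam u"]) (auto intro: pl_lam)
next
  case (Binary a b)
  define k where "k = nat (cnt a)"
  have ca: "0 \<le> cnt a" "0 \<le> cnt b" using Binary nn_cnt by auto
  have lk: "int (length (take k G)) = cnt a" "int (length (drop k G)) = cnt b"
    using Binary ca by (auto simp: k_def)
  obtain u where u: "Sk u = a" "pl n (take k G) u" "normal u"
    using Binary.IH(1)[OF _ _ lk(1)] Binary.prems by (auto dest: in_set_takeD)
  obtain v where v: "Sk v = b" "pl n (drop k G) v" "normal v"
    using Binary.IH(2)[OF _ _ lk(2)] Binary.prems by (auto dest: in_set_dropD)
  have "pl n (take k G @ drop k G) (App u v)" using u v by (intro pl_app)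
  moreover have "normal (App u v)" using u v Binary.prems by (cases u) auto
  ultimately show ?case using u v by (intro exI[of _ "App u v"]) auto
qed

lemma pl_lin: "pl n G t \<Longrightarrow> (\<forall>x\<in>set G. x < n) \<Longrightarrow> closed_at n t \<and> each_binds_one t \<and>
   (\<forall>k<n. occ k t = count_list G (n - Suc k))"
proof (induction rule: pl.induct)
  case (pl_var i n)
  then show ?case by auto
next
  case (pl_app n \<Gamma> u \<Delta> v)
  then show ?case by auto
next
  case (pl_lam n \<Gamma> u)
  have h: "\<forall>x\<in>set (\<Gamma> @ [n]). x < Suc n" using pl_lam by auto
  have c0: "count_list \<Gamma> n = 0" using pl_lam.prems by (auto simp add: count_list_0_iff)
  have "occ 0 u = 1" using pl_lam.IH[OF h] c0 by auto
  moreover have "\<forall>k<n. occ k (Lam u) = count_list \<Gamma> (n - Suc k)"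
  proof (intro allI impI)
    fix k assume "k < n"
    then have "occ (Suc k) u = count_list (\<Gamma> @ [n]) (Suc n - Suc (Suc k))" using pl_lam.IH[OF h] by auto
    then show "occ k (Lam u) = count_list \<Gamma> (n - Suc k)" using \<open>k < n\<close> by auto
  qed
  ultimately show ?case using pl_lam.IH[OF h] by auto
qed

lemma part1: "(\<exists>t. Sk t = S \<and> planar t \<and> linear t \<and> normal t) \<longleftrightarrow>
            cond_linearity S \<and> cond_normality S \<and> cond_connectedness S"
proof
  assume "\<exists>t. Sk t = S \<and> planar t \<and> linear t \<and> normal t"
  then obtain t where t: "Sk t = S" "pl 0 [] t" "normal t" by (auto simp: planar_def)
  from pl_cnt[OF t(2)] normal_nrm[OF t(3)] t(1) show "cond_linearity S \<and> cond_normality S \<and> cond_connectedness S"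
    by (auto simp: cond_linearity_def nrm_eq conn_eq cnt_def)
next
  assume "cond_linearity S \<and> cond_normality S \<and> cond_connectedness S"
  then have "nn S" "nrm S" "int (length []) = cnt S" by (auto simp: cond_linearity_def nrm_eq conn_eq cnt_def)
  from build[OF this] obtain t where "Sk t = S" "pl 0 [] t" "normal t" by auto
  with pl_lin[OF \<open>pl 0 [] t\<close>] show "\<exists>t. Sk t = S \<and> planar t \<and> linear t \<and> normal t"
    by (auto simp: planar_def linear_def)
qed


definition posall :: "sk \<Rightarrow> bool" where "posall s = (\<forall>c\<in>nodes s. 0 < cnt (subt s c))"

lemma posall_simps[simp]: "posall Leaf" "posall (Unary s) = (0 < cnt s - 1 \<and> posall s)"
  "posall (Binary a b) = (0 < cnt a + cnt b \<and> posall a \<and> posall b)"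
  unfolding posall_def by (simp_all only: ball_nodes_Leaf ball_nodes_Unary ball_nodes_Binary) simp_all

lemma posall_cnt: "posall s \<Longrightarrow> 0 < cnt s" by (induction s) auto

definition C2F :: "nat \<Rightarrow> sk \<Rightarrow> bool" where
  "C2F c s = (\<forall>p\<in>nodes s. \<not> is_un (subt s p) \<longrightarrow> cnt (subt s p) > int (ua c s p))"

lemma C2F_eq: "C2F c s = (int c < cnt s \<and> posall s)"
proof (induction s arbitrary: c)
  case Leaf then show ?case by (auto simp: C2F_def)
next
  case (Unary s)
  have "C2F c (Unary s) = C2F (Suc c) s" by (simp add: C2F_def)
  then show ?case using Unary by auto
next
  case (Binary a b)
  have "C2F c (Binary a b) = (int c < cnt (Binary a b) \<and> C2F 0 a \<and> C2F 0 b)"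
    unfolding C2F_def by (simp only: ball_nodes_Binary) simp
  then show ?case using Binary posall_cnt by auto
qed

definition C2T :: "nat \<Rightarrow> sk \<Rightarrow> bool" where
  "C2T c s = (\<forall>p\<in>nodes s. \<not> is_un (subt s p) \<and> \<not> on_root_chain s p \<longrightarrow> cnt (subt s p) > int (ua c s p))"

lemma orc_Unary: "on_root_chain (Unary s) (0#q) = on_root_chain s q"
  unfolding on_root_chain_def by (auto simp: less_Suc_eq_0_disj)
lemma orc_Binary: "on_root_chain (Binary a b) (i#q) = False"
  unfolding on_root_chain_def by (auto intro!: exI[of _ 0])
lemma orc_Nil: "on_root_chain s []" unfolding on_root_chain_def by auto

fun rc :: "sk \<Rightarrow> bool" where
  "rc Leaf = True" | "rc (Unary s) = rc s" | "rc (Binary a b) = (posall a \<and> posall b)"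

lemma C2T_eq: "C2T c s = rc s"
proof (induction s arbitrary: c)
  case Leaf then show ?case by (auto simp: C2T_def orc_Nil)
next
  case (Unary s)
  have "C2T c (Unary s) = C2T (Suc c) s" by (simp add: C2T_def orc_Unary)
  then show ?case using Unary by auto
next
  case (Binary a b)
  have "C2T c (Binary a b) = (C2F 0 a \<and> C2F 0 b)"
    unfolding C2T_def C2F_def by (simp only: ball_nodes_Binary) (simp add: orc_Nil orc_Binary)
  then show ?case using C2F_eq posall_cnt by auto
qed

definition TC :: "sk \<Rightarrow> bool" where
  "TC s = (\<forall>c\<in>nodes s. c \<noteq> [] \<and> \<not> is_leaf (subt s c) \<longrightarrow> 0 < cnt (subt s c))"

lemma leaf_cnt: "is_leaf x \<Longrightarrow> cnt x = 1" by (cases x) auto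

lemma leaf_imp: "(\<not> is_leaf x \<longrightarrow> 0 < cnt x) = (0 < cnt x)" using leaf_cnt by auto

lemma rc_posall: "0 < cnt s \<Longrightarrow> rc s = posall s"
  by (induction s) auto

lemma TC_eq: "cnt S = 0 \<Longrightarrow> cond_2connectedness S = TC S"
proof -
  assume h: "cnt S = 0"
  have "cond_2connectedness S = rc S"
    using C2T_eq[of 0 S] by (simp add: C2T_def cond_2connectedness_def unary_above_def cnt_def)
  also have "\<dots> = TC S"
  proof (cases S)
    case Leaf then show ?thesis by (simp add: TC_def)
  next
    case (Unary s)
    have "TC S = posall s"
      unfolding TC_def posall_def Unary by (simp only: ball_nodes_Unary) (simp add: leaf_imp)
    then show ?thesis using Unary h rc_posall by auto
  next
    case (Binary a b)
    have "TC S = (posall a \<and> posall b)"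
      unfolding TC_def posall_def Binary by (simp only: ball_nodes_Binary) (simp add: leaf_imp)
    then show ?thesis using Binary by auto
  qed
  finally show ?thesis .
qed


lemma subt_B1[simp]: "subt (Binary a b) (1#p) = subt b p" by (simp add: One_nat_def)
lemma bnd_App1[simp]: "bnd st q (App u v) (1#p) = bnd st (q@[1]) v p" by (simp add: One_nat_def)

lemma nodes_Cons: "a#x \<in> nodes s \<longleftrightarrow> (\<exists>s'. s = Unary s' \<and> a = 0 \<and> x \<in> nodes s') \<or>
   (\<exists>l r. s = Binary l r \<and> (a = 0 \<and> x \<in> nodes l \<or> a = 1 \<and> x \<in> nodes r))"
  by (cases s) auto

lemma P1: "x \<in> nodes s \<Longrightarrow> (x@p \<in> nodes s \<longleftrightarrow> p \<in> nodes (subt s x)) \<and> subt s (x@p) = subt (subt s x) p"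
proof (induction x arbitrary: s)
  case Nil then show ?case by simp
next
  case (Cons a x)
  then show ?case unfolding nodes_Cons[of a x] by (auto simp: nodes_Cons)
qed

lemma P2: "x@p \<in> nodes s \<Longrightarrow> x \<in> nodes s"
proof (induction x arbitrary: s)
  case Nil then show ?case by (cases s) auto
next
  case (Cons a x)
  then show ?case by (auto simp: nodes_Cons)
qed

lemma P4: "strict_prefix z y \<Longrightarrow> y \<in> nodes s \<Longrightarrow> z \<in> nodes s \<and> \<not> is_leaf (subt s z)"
proof -
  assume a: "strict_prefix z y" "y \<in> nodes s"
  then obtain w where w: "y = z @ w" "w \<noteq> []" by (auto simp: strict_prefix_def prefix_def)
  then have z: "z \<in> nodes s" using a P2 by auto
  then have "w \<in> nodes (subt s z)" using P1[OF z, of w] a w by auto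
  with w(2) have "\<not> is_leaf (subt s z)" by (cases w; cases "subt s z") auto
  with z show ?thesis by auto
qed

lemma P3: "x \<in> nodes s \<Longrightarrow> x \<noteq> [] \<Longrightarrow> butlast x \<in> nodes s \<and> \<not> is_leaf (subt s (butlast x))"
  apply (rule P4[of _ x])
   apply (metis append_butlast_last_id prefix_snocD prefix_order.refl)
  by simp

inductive_cases plLam: "pl n G (Lam u)"
inductive_cases plApp: "pl n G (App u v)"
inductive_cases plVar: "pl n G (Var i)"

lemma Dsc: "pl n G t \<Longrightarrow> x \<in> nodes (Sk t) \<Longrightarrow> \<forall>y\<in>set G. y < n \<Longrightarrow> length st = n \<Longrightarrow>
  \<exists>n' G' t' st'. pl n' G' t' \<and> Sk t' = subt (Sk t) x \<and> (\<forall>y\<in>set G'. y < n') \<and> length st' = n' \<and>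
     (\<forall>b\<in>set st'. b \<in> set st \<or> (\<exists>r. b = q@r \<and> strict_prefix r x)) \<and>
     (\<forall>p. bnd st q t (x@p) = bnd st' (q@x) t' p)"
proof (induction x arbitrary: n G t st q)
  case Nil
  then show ?case by (intro exI[of _ n] exI[of _ G] exI[of _ t] exI[of _ st]) auto
next
  case (Cons a x)
  show ?case
  proof (cases t)
    case (Var i) then show ?thesis using Cons by auto
  next
    case (Lam u)
    with Cons have ax: "a = 0" "x \<in> nodes (Sk u)" by auto
    from Cons.prems(1) Lam have pu: "pl (Suc n) (G @ [n]) u" by (auto elim: plLam)
    have "\<forall>y\<in>set (G @ [n]). y < Suc n" using Cons.prems by auto
    from Cons.IH[OF pu ax(2) this, of "q#st" "q@[0]"] Cons.prems obtain n' G' t' st' where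
      h: "pl n' G' t'" "Sk t' = subt (Sk u) x" "\<forall>y\<in>set G'. y < n'" "length st' = n'"
      "\<forall>b\<in>set st'. b \<in> set (q#st) \<or> (\<exists>r. b = (q@[0])@r \<and> strict_prefix r x)"
      "\<forall>p. bnd (q#st) (q@[0]) u (x@p) = bnd st' ((q@[0])@x) t' p" by auto
    have "\<forall>b\<in>set st'. b \<in> set st \<or> (\<exists>r. b = q@r \<and> strict_prefix r (a#x))"
    proof
      fix b assume "b \<in> set st'"
      with h(5) consider "b = q" | "b \<in> set st" | r where "b = q@(0#r)" "strict_prefix r x" by auto
      then show "b \<in> set st \<or> (\<exists>r. b = q@r \<and> strict_prefix r (a#x))"
        by cases (auto simp: ax intro: exI[of _ "[]"] exI[of _ "0#_"])
    qed
    then show ?thesis using h Lam ax by (intro exI[of _ n'] exI[of _ G'] exI[of _ t'] exI[of _ st']) auto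
  next
    case (App u v)
    from Cons.prems(1) App obtain \<Gamma> \<Delta> where pg: "pl n \<Gamma> u" "pl n \<Delta> v" "G = \<Gamma> @ \<Delta>" by (auto elim: plApp)
    from Cons App consider "a = 0" "x \<in> nodes (Sk u)" | "a = 1" "x \<in> nodes (Sk v)" by auto
    then show ?thesis
    proof cases
      case 1
      from Cons.IH[OF pg(1) 1(2), of st "q@[0]"] Cons.prems pg obtain n' G' t' st' where
        h: "pl n' G' t'" "Sk t' = subt (Sk u) x" "\<forall>y\<in>set G'. y < n'" "length st' = n'"
        "\<forall>b\<in>set st'. b \<in> set st \<or> (\<exists>r. b = (q@[0])@r \<and> strict_prefix r x)"
        "\<forall>p. bnd st (q@[0]) u (x@p) = bnd st' ((q@[0])@x) t' p" by auto
      have "\<forall>b\<in>set st'. b \<in> set st \<or> (\<exists>r. b = q@r \<and> strict_prefix r (a#x))"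
        using h(5) 1 by (auto intro: exI[of _ "0#_"])
      then show ?thesis using h App 1 by (intro exI[of _ n'] exI[of _ G'] exI[of _ t'] exI[of _ st']) auto
    next
      case 2
      from Cons.IH[OF pg(2) 2(2), of st "q@[1]"] Cons.prems pg obtain n' G' t' st' where
        h: "pl n' G' t'" "Sk t' = subt (Sk v) x" "\<forall>y\<in>set G'. y < n'" "length st' = n'"
        "\<forall>b\<in>set st'. b \<in> set st \<or> (\<exists>r. b = (q@[1])@r \<and> strict_prefix r x)"
        "\<forall>p. bnd st (q@[1]) v (x@p) = bnd st' ((q@[1])@x) t' p" by auto
      have "\<forall>b\<in>set st'. b \<in> set st \<or> (\<exists>r. b = q@r \<and> strict_prefix r (a#x))"
        using h(5) 2 by (auto intro: exI[of _ "1#_"])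
      then show ?thesis using h App 2 by (intro exI[of _ n'] exI[of _ G'] exI[of _ t'] exI[of _ st']) auto
    qed
  qed
qed

lemma Mlem: "pl n G t \<Longrightarrow> length st = n \<Longrightarrow> \<forall>y\<in>set G. y < n \<Longrightarrow>
  (\<forall>p\<in>nodes (Sk t). is_leaf (subt (Sk t) p) \<longrightarrow>
     (\<exists>l\<in>set G. bnd st q t p = st ! (n - Suc l)) \<or> (\<exists>r. bnd st q t p = q@r \<and> strict_prefix r p)) \<and>
  (\<forall>l\<in>set G. \<exists>p\<in>nodes (Sk t). is_leaf (subt (Sk t) p) \<and> bnd st q t p = st ! (n - Suc l))"
proof (induction arbitrary: st q rule: pl.induct)
  case (pl_var i n)
  then show ?case by auto
next
  case (pl_app n \<Gamma> u \<Delta> v)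
  have hG: "\<forall>y\<in>set \<Gamma>. y < n" "\<forall>y\<in>set \<Delta>. y < n" using pl_app.prems by auto
  have A: "\<forall>p\<in>nodes (Sk u). is_leaf (subt (Sk u) p) \<longrightarrow>
     (\<exists>l\<in>set \<Gamma>. bnd st (q@[0]) u p = st ! (n - Suc l)) \<or> (\<exists>r. bnd st (q@[0]) u p = (q@[0])@r \<and> strict_prefix r p)"
    "\<forall>l\<in>set \<Gamma>. \<exists>p\<in>nodes (Sk u). is_leaf (subt (Sk u) p) \<and> bnd st (q@[0]) u p = st ! (n - Suc l)"
    using pl_app.IH(1)[of st "q@[0]", OF pl_app.prems(1) hG(1)] by blast+
  have B: "\<forall>p\<in>nodes (Sk v). is_leaf (subt (Sk v) p) \<longrightarrow>
     (\<exists>l\<in>set \<Delta>. bnd st (q@[1]) v p = st ! (n - Suc l)) \<or> (\<exists>r. bnd st (q@[1]) v p = (q@[1])@r \<and> strict_prefix r p)"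
    "\<forall>l\<in>set \<Delta>. \<exists>p\<in>nodes (Sk v). is_leaf (subt (Sk v) p) \<and> bnd st (q@[1]) v p = st ! (n - Suc l)"
    using pl_app.IH(2)[of st "q@[1]", OF pl_app.prems(1) hG(2)] by blast+
  have C1: "\<forall>p\<in>nodes (Sk (App u v)). is_leaf (subt (Sk (App u v)) p) \<longrightarrow>
     (\<exists>l\<in>set (\<Gamma>@\<Delta>). bnd st q (App u v) p = st ! (n - Suc l)) \<or> (\<exists>r. bnd st q (App u v) p = q@r \<and> strict_prefix r p)"
  proof (intro ballI impI)
    fix p assume p: "p \<in> nodes (Sk (App u v))" and lf: "is_leaf (subt (Sk (App u v)) p)"
    then consider p' where "p = 0#p'" "p' \<in> nodes (Sk u)" "is_leaf (subt (Sk u) p')"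
      | p' where "p = 1#p'" "p' \<in> nodes (Sk v)" "is_leaf (subt (Sk v) p')" by auto
    then show "(\<exists>l\<in>set (\<Gamma>@\<Delta>). bnd st q (App u v) p = st ! (n - Suc l)) \<or> (\<exists>r. bnd st q (App u v) p = q@r \<and> strict_prefix r p)"
    proof cases
      case (1 p')
      with A(1) show ?thesis by (fastforce intro: exI[of _ "0#_"])
    next
      case (2 p')
      with B(1) show ?thesis by (fastforce intro: exI[of _ "1#_"])
    qed
  qed
  have C2: "\<forall>l\<in>set (\<Gamma>@\<Delta>). \<exists>p\<in>nodes (Sk (App u v)). is_leaf (subt (Sk (App u v)) p) \<and> bnd st q (App u v) p = st ! (n - Suc l)"
  proof
    fix l assume "l \<in> set (\<Gamma>@\<Delta>)"
    then consider "l \<in> set \<Gamma>" | "l \<in> set \<Delta>" by auto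
    then show "\<exists>p\<in>nodes (Sk (App u v)). is_leaf (subt (Sk (App u v)) p) \<and> bnd st q (App u v) p = st ! (n - Suc l)"
    proof cases
      case 1 with A(2) obtain p where "p\<in>nodes (Sk u)" "is_leaf (subt (Sk u) p)" "bnd st (q@[0]) u p = st ! (n - Suc l)" by auto
      then show ?thesis by (intro bexI[of _ "0#p"]) auto
    next
      case 2 with B(2) obtain p where "p\<in>nodes (Sk v)" "is_leaf (subt (Sk v) p)" "bnd st (q@[1]) v p = st ! (n - Suc l)" by auto
      then show ?thesis by (intro bexI[of _ "1#p"]) auto
    qed
  qed
  from C1 C2 show ?case by blast
next
  case (pl_lam n \<Gamma> u)
  have hh: "\<forall>y\<in>set (\<Gamma>@[n]). y < Suc n" using pl_lam.prems by auto
  have A: "\<forall>p\<in>nodes (Sk u). is_leaf (subt (Sk u) p) \<longrightarrow>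
     (\<exists>l\<in>set (\<Gamma>@[n]). bnd (q#st) (q@[0]) u p = (q#st) ! (Suc n - Suc l)) \<or> (\<exists>r. bnd (q#st) (q@[0]) u p = (q@[0])@r \<and> strict_prefix r p)"
    "\<forall>l\<in>set (\<Gamma>@[n]). \<exists>p\<in>nodes (Sk u). is_leaf (subt (Sk u) p) \<and> bnd (q#st) (q@[0]) u p = (q#st) ! (Suc n - Suc l)"
    using pl_lam.IH[of "q#st" "q@[0]", OF _ hh] pl_lam.prems by auto
  have C1: "\<forall>p\<in>nodes (Sk (Lam u)). is_leaf (subt (Sk (Lam u)) p) \<longrightarrow>
     (\<exists>l\<in>set \<Gamma>. bnd st q (Lam u) p = st ! (n - Suc l)) \<or> (\<exists>r. bnd st q (Lam u) p = q@r \<and> strict_prefix r p)"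
  proof (intro ballI impI)
    fix p0 assume p0: "p0 \<in> nodes (Sk (Lam u))" and lf: "is_leaf (subt (Sk (Lam u)) p0)"
    then obtain p where pp: "p0 = 0#p" "p \<in> nodes (Sk u)" "is_leaf (subt (Sk u) p)" by auto
    with A(1) consider l where "l \<in> set (\<Gamma>@[n])" "bnd (q#st) (q@[0]) u p = (q#st) ! (Suc n - Suc l)"
      | r where "bnd (q#st) (q@[0]) u p = (q@[0])@r" "strict_prefix r p" by blast
    then show "(\<exists>l\<in>set \<Gamma>. bnd st q (Lam u) p0 = st ! (n - Suc l)) \<or> (\<exists>r. bnd st q (Lam u) p0 = q @ r \<and> strict_prefix r p0)"
    proof cases
      case (1 l)
      show ?thesis
      proof (cases "l = n")
        case True with 1 pp show ?thesis by (auto intro!: exI[of _ "[]"])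
      next
        case False
        with 1 pl_lam.prems have "l \<in> set \<Gamma>" "l < n" by auto
        moreover have "(q#st) ! (Suc n - Suc l) = st ! (n - Suc l)" using \<open>l < n\<close>
          by (simp add: Suc_diff_Suc)
        ultimately show ?thesis using 1 pp by auto
      qed
    next
      case (2 r) then show ?thesis using pp by (auto intro!: exI[of _ "0#r"])
    qed
  qed
  have C2: "\<forall>l\<in>set \<Gamma>. \<exists>p\<in>nodes (Sk (Lam u)). is_leaf (subt (Sk (Lam u)) p) \<and> bnd st q (Lam u) p = st ! (n - Suc l)"
  proof
    fix l assume l: "l \<in> set \<Gamma>"
    then have "l < n" using pl_lam.prems by auto
    from l A(2) obtain p where "p\<in>nodes (Sk u)" "is_leaf (subt (Sk u) p)" "bnd (q#st) (q@[0]) u p = (q#st) ! (Suc n - Suc l)" by auto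
    moreover have "(q#st) ! (Suc n - Suc l) = st ! (n - Suc l)" using \<open>l < n\<close>
      by (simp add: Suc_diff_Suc)
    ultimately show "\<exists>p\<in>nodes (Sk (Lam u)). is_leaf (subt (Sk (Lam u)) p) \<and> bnd st q (Lam u) p = st ! (n - Suc l)"
      by (intro bexI[of _ "0#p"]) auto
  qed
  from C1 C2 show ?case by blast
qed


lemma pb1: "prefix (butlast x) x" by (cases x rule: rev_cases) auto
lemma pb2: "prefix c x \<Longrightarrow> c \<noteq> x \<Longrightarrow> prefix c (butlast x)" by (cases x rule: rev_cases) auto
lemma pb3: "strict_prefix b x \<Longrightarrow> prefix b (butlast x)" by (auto simp: strict_prefix_def pb2)

lemma T_c: "pl 0 [] t \<Longrightarrow> c \<in> nodes (Sk t) \<Longrightarrow> is_leaf (subt (Sk t) c) \<Longrightarrow> strict_prefix (binder_of t c) c"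
  using Mlem[of 0 "[]" t "[]" "[]"] by (auto simp: binder_of_def)

lemma T_desc: assumes "pl 0 [] t" "x \<in> nodes (Sk t)"
  shows "\<exists>n' G' t' st'. pl n' G' t' \<and> Sk t' = subt (Sk t) x \<and> (\<forall>y\<in>set G'. y < n') \<and> length st' = n' \<and>
     (\<forall>b\<in>set st'. strict_prefix b x) \<and> (\<forall>p. binder_of t (x@p) = bnd st' x t' p)"
  using Dsc[OF assms, of "[]" "[]"] by (auto simp: binder_of_def)

lemma T_cnt: assumes "pl 0 [] t" "x \<in> nodes (Sk t)" shows "0 \<le> cnt (subt (Sk t) x)"
  using T_desc[OF assms] pl_cnt by force

lemma T_a: assumes "pl 0 [] t" "x \<in> nodes (Sk t)" "0 < cnt (subt (Sk t) x)"
  shows "\<exists>p. x@p \<in> nodes (Sk t) \<and> is_leaf (subt (Sk t) (x@p)) \<and> \<not> prefix x (binder_of t (x@p))"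
proof -
  obtain n' G' t' st' where h: "pl n' G' t'" "Sk t' = subt (Sk t) x" "\<forall>y\<in>set G'. y < n'" "length st' = n'"
     "\<forall>b\<in>set st'. strict_prefix b x" "\<forall>p. binder_of t (x@p) = bnd st' x t' p"
    using T_desc[OF assms(1,2)] by blast
  have "G' \<noteq> []" using pl_cnt[OF h(1)] h(2) assms(3) by auto
  then obtain l where l: "l \<in> set G'" by (cases G') auto
  with h(3) have "l < n'" by auto
  from Mlem[OF h(1) h(4) h(3), of x] l obtain p where p: "p \<in> nodes (Sk t')" "is_leaf (subt (Sk t') p)"
    "bnd st' x t' p = st' ! (n' - Suc l)" by blast
  have "st' ! (n' - Suc l) \<in> set st'" using \<open>l < n'\<close> h(4) by auto
  with h(5) have sp: "strict_prefix (binder_of t (x@p)) x" using p(3) h(6) by auto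
  have "\<not> prefix x (binder_of t (x@p))"
    using sp by (meson prefix_order.dual_order.strict_trans2 prefix_order.less_irrefl)
  moreover have "x@p \<in> nodes (Sk t)" "is_leaf (subt (Sk t) (x@p))" using P1[OF assms(2), of p] p h(2) by auto
  ultimately show ?thesis by blast
qed

lemma T_b: assumes "pl 0 [] t" "x \<in> nodes (Sk t)" "cnt (subt (Sk t) x) = 0"
   "c \<in> nodes (Sk t)" "is_leaf (subt (Sk t) c)" "prefix x c"
  shows "prefix x (binder_of t c)"
proof -
  obtain n' G' t' st' where h: "pl n' G' t'" "Sk t' = subt (Sk t) x" "\<forall>y\<in>set G'. y < n'" "length st' = n'"
     "\<forall>b\<in>set st'. strict_prefix b x" "\<forall>p. binder_of t (x@p) = bnd st' x t' p"
    using T_desc[OF assms(1,2)] by blast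
  have "G' = []" using pl_cnt[OF h(1)] h(2) assms(3) by auto
  from assms(6) obtain p where c: "c = x@p" by (auto simp: prefix_def)
  have "p \<in> nodes (Sk t')" "is_leaf (subt (Sk t') p)" using P1[OF assms(2), of p] assms(4,5) h(2) c by auto
  with Mlem[OF h(1) h(4) h(3), of x] \<open>G' = []\<close> obtain r where "bnd st' x t' p = x@r" by auto
  then show ?thesis using h(6) c by auto
qed

lemma adj_sym: "adj ends E x y = adj ends E y x" unfolding adj_def by auto
lemma rt_sym: "(adj ends E)\<^sup>*\<^sup>* x y \<Longrightarrow> (adj ends E)\<^sup>*\<^sup>* y x"
proof (induction rule: rtranclp_induct)
  case base then show ?case by simp
next
  case (step y z) then show ?case using adj_sym
    by (metis converse_rtranclp_into_rtranclp)
qed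

lemma ends_int: "\<not> is_leaf (subt (Sk t) c) \<Longrightarrow> diag_ends t c = (butlast c, c)"
  by (simp add: diag_ends_def)
lemma ends_leaf: "is_leaf (subt (Sk t) c) \<Longrightarrow> diag_ends t c = (butlast c, binder_of t c)"
  by (simp add: diag_ends_def)

lemma Down: "x@w \<in> nodes (Sk t) \<Longrightarrow> \<not> is_leaf (subt (Sk t) (x@w)) \<Longrightarrow>
   (\<forall>z. strict_prefix x z \<and> prefix z (x@w) \<longrightarrow> z \<noteq> e) \<Longrightarrow>
   (adj (diag_ends t) (diag_edges t - {e}))\<^sup>*\<^sup>* x (x@w)"
proof (induction w rule: rev_induct)
  case Nil then show ?case by simp
next
  case (snoc a w)
  have y: "x @ w @ [a] \<noteq> []" by simp
  have bl: "butlast (x @ w @ [a]) = x @ w" by (simp flip: append_assoc)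
  from P3[OF snoc.prems(1) y] bl have "x@w \<in> nodes (Sk t)" "\<not> is_leaf (subt (Sk t) (x@w))" by auto
  moreover have "\<forall>z. strict_prefix x z \<and> prefix z (x@w) \<longrightarrow> z \<noteq> e"
    using snoc.prems(3) by (metis append_assoc prefix_append)
  ultimately have ih: "(adj (diag_ends t) (diag_edges t - {e}))\<^sup>*\<^sup>* x (x@w)" using snoc.IH by blast
  have "x @ w @ [a] \<noteq> e" using snoc.prems(3)[rule_format, of "x @ w @ [a]"]
    by (auto simp: strict_prefix_def)
  then have "adj (diag_ends t) (diag_edges t - {e}) (x@w) (x @ w @ [a])"
    unfolding adj_def using snoc.prems(1,2) ends_int[of t "x @ w @ [a]"] bl
    by (intro bexI[of _ "x @ w @ [a]"]) (auto simp: diag_edges_def)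
  with ih show ?case by (simp add: rtranclp.rtrancl_into_rtrancl)
qed


lemma Up: assumes pt: "pl 0 [] t" and tc: "TC (Sk t)"
  shows "x \<in> diag_vertices t \<Longrightarrow> (adj (diag_ends t) (diag_edges t - {e}))\<^sup>*\<^sup>* x []"
proof (induction "length x" arbitrary: x rule: less_induct)
  case less
  let ?R = "adj (diag_ends t) (diag_edges t - {e})"
  have xn: "x \<in> nodes (Sk t)" and xl: "\<not> is_leaf (subt (Sk t) x)" using less.prems by (auto simp: diag_vertices_def)
  show ?case
  proof (cases "x = []")
    case True then show ?thesis by simp
  next
    case xne: False
    show ?thesis
    proof (cases "x = e")
      case False
      from P3[OF xn xne] have bv: "butlast x \<in> diag_vertices t" by (auto simp: diag_vertices_def)
      have "length (butlast x) < length x" using xne by simp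
      with less.hyps bv have ih: "?R\<^sup>*\<^sup>* (butlast x) []" by blast
      have "?R x (butlast x)" unfolding adj_def using False xn xne ends_int[OF xl]
        by (intro bexI[of _ x]) (auto simp: diag_edges_def)
      from this ih show ?thesis by (rule converse_rtranclp_into_rtranclp)
    next
      case True
      have "0 < cnt (subt (Sk t) x)" using tc xn xne xl by (auto simp: TC_def)
      from T_a[OF pt xn this] obtain p where p: "x@p \<in> nodes (Sk t)" "is_leaf (subt (Sk t) (x@p))"
        "\<not> prefix x (binder_of t (x@p))" by blast
      define c where "c = x@p"
      define b where "b = binder_of t c"
      have pne: "p \<noteq> []" using p(2) xl by auto
      have sbc: "strict_prefix b c" using T_c[OF pt] p c_def b_def by auto
      from P4[OF sbc] p c_def have bv: "b \<in> diag_vertices t" by (auto simp: diag_vertices_def)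
      have "prefix b x \<or> prefix x b"
        using sbc by (intro prefix_same_cases[of b c x]) (auto simp: strict_prefix_def c_def)
      with p(3) have "prefix b x" "b \<noteq> x" by (auto simp: b_def c_def)
      then have "length b < length x" by (intro prefix_length_less) (auto simp: strict_prefix_def)
      with less.hyps bv have ih: "?R\<^sup>*\<^sup>* b []" by blast
      have blc: "butlast c = x @ butlast p" using pne by (simp add: c_def butlast_append)
      have "c \<noteq> []" using pne c_def by simp
      from P3[OF _ this] p have "butlast c \<in> nodes (Sk t)" "\<not> is_leaf (subt (Sk t) (butlast c))"
        by (auto simp: c_def)
      then have d: "?R\<^sup>*\<^sup>* x (butlast c)" using Down[of x "butlast p" t e] blc True
        by (auto simp: strict_prefix_def)
      have "c \<noteq> e" using True pne c_def by auto
      then have "?R (butlast c) b" unfolding adj_def using p ends_leaf[of t c] \<open>c \<noteq> []\<close>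
        by (intro bexI[of _ c]) (auto simp: diag_edges_def c_def b_def)
      with d ih show ?thesis by (meson rtranclp.rtrancl_into_rtrancl rtranclp_trans)
    qed
  qed
qed

lemma Inv: assumes pt: "pl 0 [] t" and cn: "c \<in> nodes (Sk t)" and c0: "cnt (subt (Sk t) c) = 0"
  shows "(adj (diag_ends t) (diag_edges t - {c}))\<^sup>*\<^sup>* c y \<Longrightarrow> prefix c y"
proof (induction rule: rtranclp_induct)
  case base then show ?case by simp
next
  case (step y z)
  from step.hyps(2) obtain e' where e': "e' \<in> diag_edges t" "e' \<noteq> c"
    "diag_ends t e' = (y, z) \<or> diag_ends t e' = (z, y)" by (auto simp: adj_def)
  have en: "e' \<in> nodes (Sk t)" using e' by (auto simp: diag_edges_def)
  show ?case
  proof (cases "is_leaf (subt (Sk t) e')")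
    case True
    have sb: "strict_prefix (binder_of t e') e'" using T_c[OF pt en True] .
    from e'(3) consider "y = butlast e'" "z = binder_of t e'" | "z = butlast e'" "y = binder_of t e'"
      using ends_leaf[OF True] by auto
    then show ?thesis
    proof cases
      case 1
      then have "prefix c e'" using step.IH pb1 by (metis prefix_order.trans)
      then show ?thesis using T_b[OF pt cn c0 en True] 1 by simp
    next
      case 2
      then show ?thesis using step.IH pb3[OF sb] by (metis prefix_order.trans)
    qed
  next
    case False
    from e'(3) consider "y = butlast e'" "z = e'" | "z = butlast e'" "y = e'"
      using ends_int[OF False] by auto
    then show ?thesis
    proof cases
      case 1 then show ?thesis using step.IH pb1 by (metis prefix_order.trans)
    next
      case 2 then show ?thesis using step.IH pb2 e'(2) by auto
    qed
  qed
qed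

lemma part2: assumes pt: "pl 0 [] t" shows "two_connected t \<longleftrightarrow> TC (Sk t)"
proof
  assume tc: "TC (Sk t)"
  have all: "\<forall>x\<in>diag_vertices t. \<forall>y\<in>diag_vertices t. (adj (diag_ends t) (diag_edges t - {e}))\<^sup>*\<^sup>* x y" for e
    using Up[OF pt tc] rt_sym by (meson rtranclp_trans)
  have "diag_edges t - {[]} = diag_edges t" by (auto simp: diag_edges_def)
  then show "two_connected t" using all[of "[]"] all
    unfolding two_connected_def two_edge_connected_def by metis
next
  assume tc: "two_connected t"
  show "TC (Sk t)" unfolding TC_def
  proof (intro ballI impI)
    fix c assume cn: "c \<in> nodes (Sk t)" and h: "c \<noteq> [] \<and> \<not> is_leaf (subt (Sk t) c)"
    show "0 < cnt (subt (Sk t) c)"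
    proof (rule ccontr)
      assume "\<not> 0 < cnt (subt (Sk t) c)"
      with T_cnt[OF pt cn] have c0: "cnt (subt (Sk t) c) = 0" by auto
      have "Sk t \<noteq> Leaf" using pt by (cases t) (auto elim: plVar)
      then have rv: "[] \<in> diag_vertices t" by (cases "Sk t") (auto simp: diag_vertices_def)
      have cv: "c \<in> diag_vertices t" "c \<in> diag_edges t" using cn h by (auto simp: diag_vertices_def diag_edges_def)
      from tc rv cv have "(adj (diag_ends t) (diag_edges t - {c}))\<^sup>*\<^sup>* c []"
        unfolding two_connected_def two_edge_connected_def by blast
      from Inv[OF pt cn c0 this] h show False by simp
    qed
  qed
qed

theorem proposition1:
  fixes S :: sk
  shows "((\<exists>t. Sk t = S \<and> planar t \<and> linear t \<and> normal t) \<longleftrightarrow>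
            cond_linearity S \<and> cond_normality S \<and> cond_connectedness S)
       \<and> (\<forall>t. Sk t = S \<and> planar t \<and> linear t \<and> normal t \<longrightarrow>
            (two_connected t \<longleftrightarrow> cond_2connectedness S))"
proof (intro conjI allI impI)
  show "(\<exists>t. Sk t = S \<and> planar t \<and> linear t \<and> normal t) \<longleftrightarrow>
            cond_linearity S \<and> cond_normality S \<and> cond_connectedness S" by (rule part1)
  fix t assume "Sk t = S \<and> planar t \<and> linear t \<and> normal t"
  then have S: "Sk t = S" and pt: "pl 0 [] t" by (auto simp: planar_def)
  have "cnt S = 0" using pl_cnt[OF pt] S by simp
  then show "two_connected t \<longleftrightarrow> cond_2connectedness S" using part2[OF pt] TC_eq S by simp
qed

end
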